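(* Let $\mathcal{T}=(\mathbb{K}_i,\phi_i)_{i=0,\dots,m}$ be a tower with $\mathbb{K}_0=\emptyset$ whose maps are elementary inclusions or elementary contractions, named according to the naming convention below, and let $\hat{\mathbb{K}}_0,\dots,\hat{\mathbb{K}}_m$ be the active small coning construction. For every $i$, a simplex $\sigma$ belongs to $\mathbb{K}_i$ if and only if $\sigma$ is an active simplex of $\hat{\mathbb{K}}_i$.
   Context: Elementary inclusion: $\mathbb{K}_{i+1}=\mathbb{K}_i\cup\{\sigma\}$, $\sigma\notin\mathbb{K}_i$, $\phi_i$ the inclusion. Elementary contraction of distinct vertices $u,v$ of $\mathbb{K}_i$: for one of them, say $v$, the vertex set of $\mathbb{K}_{i+1}$ is that of $\mathbb{K}_i$ minus $v$, $\phi_i(u)=\phi_i(v)=u$, $\phi_i$ is the identity on other vertices, and $\mathbb{K}_{i+1}=\phi_i(\mathbb{K}_i)$. Active small coning construction: $\hat{\mathbb{K}}_0=\emptyset$; vertices flagged active/inactive, a simplex is active iff all its vertices are; $\mathrm{Act}\overline{\mathrm{St}}(w,\hat{\mathbb{K}}_i)$ = active simplices of $\hat{\mathbb{K}}_i$ in the closed star of $w$ (all faces of simplices containing $w$). Inclusion of $\sigma$: $\hat{\mathbb{K}}_{i+1}=\hat{\mathbb{K}}_i\cup\{\sigma\}$, a new vertex marked active. Contraction of $u,v$: if $|\mathrm{Act}\overline{\mathrm{St}}(u,\hat{\mathbb{K}}_i)|\le|\mathrm{Act}\overline{\mathrm{St}}(v,\hat{\mathbb{K}}_i)|$, $\hat{\mathbb{K}}_{i+1}=\hat{\mathbb{K}}_i\cup\{\{v\}\cup\tau:\tau\in\mathrm{Act}\overline{\mathrm{St}}(u,\hat{\mathbb{K}}_i)\}$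 and $u$ is marked inactive; otherwise the same with $u,v$ exchanged. Naming convention: each contraction maps $u$ and $v$ to the vertex not marked inactive in that step. *)

theory Defs
  imports Main
begin

definition simplicial_complex :: "'v set set \<Rightarrow> bool" where
  "simplicial_complex K \<longleftrightarrow>
     (\<forall>\<sigma>\<in>K. finite \<sigma> \<and> \<sigma> \<noteq> {} \<and> (\<forall>\<tau>. \<tau> \<noteq> {} \<and> \<tau> \<subseteq> \<sigma> \<longrightarrow> \<tau> \<in> K))"

definition vertices :: "'v set set \<Rightarrow> 'v set" where
  "vertices K = {w. {w} \<in> K}"

datatype 'v elem_op = Incl "'v set" | Contr 'v 'v

definition closed_star :: "'v \<Rightarrow> 'v set set \<Rightarrow> 'v set set" where
  "closed_star w L = {\<tau> \<in> L. \<exists>\<rho>\<in>L. w \<in> \<rho> \<and> \<tau> \<subseteq> \<rho>}"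

definition act_simplices :: "'v set set \<times> 'v set \<Rightarrow> 'v set set" where
  "act_simplices S = {\<tau> \<in> fst S. \<tau> \<subseteq> snd S}"

definition act_closed_star :: "'v \<Rightarrow> 'v set set \<times> 'v set \<Rightarrow> 'v set set" where
  "act_closed_star w S = {\<tau> \<in> closed_star w (fst S). \<tau> \<subseteq> snd S}"

text \<open>For a contraction of u and v in coning state S: the pair (vertex marked inactive,
  surviving vertex).\<close>
definition contr_choice :: "'v \<Rightarrow> 'v \<Rightarrow> 'v set set \<times> 'v set \<Rightarrow> 'v \<times> 'v" where
  "contr_choice u v S =
     (if card (act_closed_star u S) \<le> card (act_closed_star v S) then (u, v) else (v, u))"

text \<open>One step of the active small coning construction; state = (complex, active vertices).\<close>
fun coning_step :: "'v elem_op \<Rightarrow> 'v set set \<times> 'v set \<Rightarrow> 'v set set \<times> 'v set" where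
  "coning_step (Incl \<sigma>) (L, A) = (L \<union> {\<sigma>}, if card \<sigma> = 1 then A \<union> \<sigma> else A)"
| "coning_step (Contr u v) (L, A) =
     (let (l, s) = contr_choice u v (L, A)
      in (L \<union> (insert s ` act_closed_star l (L, A)), A - {l}))"

primrec coning :: "(nat \<Rightarrow> 'v elem_op) \<Rightarrow> nat \<Rightarrow> 'v set set \<times> 'v set" where
  "coning ops 0 = ({}, {})"
| "coning ops (Suc i) = coning_step (ops i) (coning ops i)"

definition contract_map :: "'v \<Rightarrow> 'v \<Rightarrow> 'v \<Rightarrow> 'v" where
  "contract_map l s = (\<lambda>x. if x = l then s else x)"

text \<open>K' arises from K by the elementary operation op; contractions are named according
  to the naming convention (both vertices map to the one not marked inactive in state S).\<close>
fun tower_step :: "'v elem_op \<Rightarrow> 'v set set \<times> 'v set \<Rightarrow> 'v set set \<Rightarrow> 'v set set \<Rightarrow> bool" where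
  "tower_step (Incl \<sigma>) S K K' \<longleftrightarrow> finite \<sigma> \<and> \<sigma> \<noteq> {} \<and> \<sigma> \<notin> K \<and> K' = K \<union> {\<sigma>}"
| "tower_step (Contr u v) S K K' \<longleftrightarrow>
     u \<noteq> v \<and> u \<in> vertices K \<and> v \<in> vertices K \<and>
     (let (l, s) = contr_choice u v S in K' = (\<lambda>\<tau>. contract_map l s ` \<tau>) ` K)"

end

theory Submission
  imports Defs
begin

definition fclosed :: "'v set set \<Rightarrow> bool" where
  "fclosed L \<longleftrightarrow> (\<forall>\<rho>\<in>L. \<forall>\<tau>. \<tau> \<noteq> {} \<and> \<tau> \<subseteq> \<rho> \<longrightarrow> \<tau> \<in> L)"

lemma sc_face: "simplicial_complex K \<Longrightarrow> \<sigma> \<in> K \<Longrightarrow> \<tau> \<noteq> {} \<Longrightarrow> \<tau> \<subseteq> \<sigma> \<Longrightarrow> \<tau> \<in> K"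
  unfolding simplicial_complex_def by blast

lemma fc_face: "fclosed L \<Longrightarrow> \<sigma> \<in> L \<Longrightarrow> \<tau> \<noteq> {} \<Longrightarrow> \<tau> \<subseteq> \<sigma> \<Longrightarrow> \<tau> \<in> L"
  unfolding fclosed_def by blast

lemma incl_step:
  assumes K: "K = act_simplices (L, A)" and fc: "fclosed L"
    and sc: "simplicial_complex (K \<union> {\<sigma>})" and ns: "\<sigma> \<notin> K"
    and w: "\<And>w. \<sigma> = {w} \<Longrightarrow> w \<notin> \<Union> L"
  shows "K \<union> {\<sigma>} = act_simplices (coning_step (Incl \<sigma>) (L, A))
     \<and> fclosed (fst (coning_step (Incl \<sigma>) (L, A)))
     \<and> \<Union> (fst (coning_step (Incl \<sigma>) (L, A))) \<subseteq> \<Union> L \<union> \<sigma>"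
proof (intro conjI)
  have KL: "K \<subseteq> L" using K by (auto simp: act_simplices_def)
  show "fclosed (fst (coning_step (Incl \<sigma>) (L, A)))"
  proof -
    have "\<tau> \<in> L \<union> {\<sigma>}" if "\<rho> \<in> L \<union> {\<sigma>}" "\<tau> \<noteq> {}" "\<tau> \<subseteq> \<rho>" for \<rho> \<tau>
    proof (cases "\<rho> \<in> L")
      case True then show ?thesis using fc that unfolding fclosed_def by blast
    next
      case False
      then have "\<rho> = \<sigma>" using that by auto
      then have "\<tau> \<in> K \<union> {\<sigma>}" using sc_face[OF sc _ that(2)] that(3) by blast
      then show ?thesis using KL by blast
    qed
    then show ?thesis by (auto simp: fclosed_def)
  qed
  show "\<Union> (fst (coning_step (Incl \<sigma>) (L, A))) \<subseteq> \<Union> L \<union> \<sigma>" by auto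
  show "K \<union> {\<sigma>} = act_simplices (coning_step (Incl \<sigma>) (L, A))"
  proof (cases "card \<sigma> = 1")
    case True
    then obtain x where x: "\<sigma> = {x}" by (auto simp: card_Suc_eq)
    have "x \<notin> \<Union> L" using w x by blast
    then show ?thesis using K x by (auto simp: act_simplices_def)
  next
    case False
    have "\<sigma> \<subseteq> A"
    proof
      fix y assume y: "y \<in> \<sigma>"
      have "{y} \<in> K \<union> {\<sigma>}" using sc_face[OF sc, of \<sigma> "{y}"] y by blast
      moreover have "{y} \<noteq> \<sigma>" using False by auto
      ultimately have "{y} \<in> K" by blast
      then show "y \<in> A" using K by (auto simp: act_simplices_def)
    qed
    then show ?thesis using K False by (auto simp: act_simplices_def)
  qed
qed

lemma contr_step:
  assumes K: "K = act_simplices (L, A)" and fc: "fclosed L"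
    and sc: "simplicial_complex K"
    and uv: "u \<noteq> v" "u \<in> vertices K" "v \<in> vertices K"
    and ch: "contr_choice u v (L, A) = (l, s)"
  shows "(\<lambda>\<tau>. contract_map l s ` \<tau>) ` K = act_simplices (coning_step (Contr u v) (L, A))
     \<and> fclosed (fst (coning_step (Contr u v) (L, A)))
     \<and> \<Union> (fst (coning_step (Contr u v) (L, A))) \<subseteq> \<Union> L"
proof -
  have KL: "K \<subseteq> L" using K by (auto simp: act_simplices_def)
  have ls: "(l = u \<and> s = v) \<or> (l = v \<and> s = u)" using ch
    by (auto simp: contr_choice_def split: if_splits)
  have sl: "s \<noteq> l" using ls uv by auto
  have sK: "{s} \<in> K" using ls uv by (auto simp: vertices_def)
  have sA: "s \<in> A" using sK K by (auto simp: act_simplices_def)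
  have step: "coning_step (Contr u v) (L, A) =
     (L \<union> (insert s ` act_closed_star l (L, A)), A - {l})" using ch by simp
  define C where "C = act_closed_star l (L, A)"
  have CK: "C \<subseteq> K" using K by (auto simp: C_def act_closed_star_def closed_star_def act_simplices_def)
  have fc2: "fclosed (L \<union> insert s ` C)"
  proof -
    have "\<tau> \<in> L \<union> insert s ` C" if P: "\<rho> \<in> L \<union> insert s ` C" "\<tau> \<noteq> {}" "\<tau> \<subseteq> \<rho>" for \<rho> \<tau>
    proof (cases "\<rho> \<in> L")
      case True then show ?thesis using fc_face[OF fc True P(2,3)] by blast
    next
      case False
      then obtain \<tau>' where t': "\<tau>' \<in> C" "\<rho> = insert s \<tau>'" using P by auto
      show ?thesis
      proof (cases "s \<in> \<tau>")
        case False
        then have "\<tau> \<subseteq> \<tau>'" using t' P by auto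
        moreover have "\<tau>' \<in> K" using t'(1) CK by blast
        ultimately have "\<tau> \<in> K" using sc_face[OF sc _ P(2)] by blast
        then show ?thesis using KL by blast
      next
        case True
        show ?thesis
        proof (cases "\<tau> - {s} = {}")
          case True
          then have "\<tau> = {s}" using \<open>s \<in> \<tau>\<close> by auto
          then show ?thesis using sK KL by blast
        next
          case ne: False
          have sub: "\<tau> - {s} \<subseteq> \<tau>'" using t' P by auto
          have "\<tau>' \<in> K" using t'(1) CK by blast
          then have "\<tau> - {s} \<in> K" using sc_face[OF sc _ ne sub] by blast
          moreover have "\<tau> - {s} \<in> C"
          proof -
            from t'(1) obtain \<rho>' where "\<rho>' \<in> L" "l \<in> \<rho>'" "\<tau>' \<subseteq> \<rho>'"
              by (auto simp: C_def act_closed_star_def closed_star_def)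
            moreover have "\<tau> - {s} \<subseteq> A" using \<open>\<tau> - {s} \<in> K\<close> K by (auto simp: act_simplices_def)
            ultimately show ?thesis using sub \<open>\<tau> - {s} \<in> K\<close> KL
              by (auto simp: C_def act_closed_star_def closed_star_def)
          qed
          moreover have "\<tau> = insert s (\<tau> - {s})" using True by auto
          ultimately show ?thesis by blast
        qed
      qed
    qed
    then show ?thesis by (auto simp: fclosed_def)
  qed
  have un: "\<Union> (L \<union> insert s ` C) \<subseteq> \<Union> L"
  proof -
    have "s \<in> \<Union> L" using sK KL by blast
    moreover have "\<Union> C \<subseteq> \<Union> L" using CK KL by blast
    ultimately show ?thesis by blast
  qed
  have eq: "(\<lambda>\<tau>. contract_map l s ` \<tau>) ` K = act_simplices (L \<union> insert s ` C, A - {l})"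
  proof
    show "(\<lambda>\<tau>. contract_map l s ` \<tau>) ` K \<subseteq> act_simplices (L \<union> insert s ` C, A - {l})"
    proof
      fix x assume "x \<in> (\<lambda>\<tau>. contract_map l s ` \<tau>) ` K"
      then obtain \<tau> where t: "\<tau> \<in> K" "x = contract_map l s ` \<tau>" by auto
      have tA: "\<tau> \<in> L" "\<tau> \<subseteq> A" using t K by (auto simp: act_simplices_def)
      show "x \<in> act_simplices (L \<union> insert s ` C, A - {l})"
      proof (cases "l \<in> \<tau>")
        case False
        then have "x = \<tau>" using t by (auto simp: contract_map_def)
        then show ?thesis using tA False by (auto simp: act_simplices_def)
      next
        case True
        then have x: "x = insert s (\<tau> - {l})" using t by (auto simp: contract_map_def)
        show ?thesis
        proof (cases "\<tau> - {l} = {}")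
          case True
          then have "x = {s}" using x by auto
          then show ?thesis using sK KL sA sl by (auto simp: act_simplices_def)
        next
          case False
          have "\<tau> - {l} \<in> K" using sc_face[OF sc t(1) False] by blast
          then have "\<tau> - {l} \<in> C" using True tA KL
            by (auto simp: C_def act_closed_star_def closed_star_def)
          then show ?thesis using x tA sA sl by (auto simp: act_simplices_def)
        qed
      qed
    qed
    show "act_simplices (L \<union> insert s ` C, A - {l}) \<subseteq> (\<lambda>\<tau>. contract_map l s ` \<tau>) ` K"
    proof
      fix x assume x: "x \<in> act_simplices (L \<union> insert s ` C, A - {l})"
      then have xA: "x \<subseteq> A - {l}" by (auto simp: act_simplices_def)
      show "x \<in> (\<lambda>\<tau>. contract_map l s ` \<tau>) ` K"
      proof (cases "x \<in> L")
        case True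
        then have "x \<in> K" using xA K by (auto simp: act_simplices_def)
        moreover have "contract_map l s ` x = x" using xA by (auto simp: contract_map_def)
        ultimately show ?thesis by (metis image_eqI)
      next
        case False
        then obtain \<tau>' where t': "\<tau>' \<in> C" "x = insert s \<tau>'" using x by (auto simp: act_simplices_def)
        have nl: "l \<notin> \<tau>'" using t' xA by auto
        from t'(1) obtain \<rho>' where r: "\<rho>' \<in> L" "l \<in> \<rho>'" "\<tau>' \<subseteq> \<rho>'"
          by (auto simp: C_def act_closed_star_def closed_star_def)
        have "{l} \<in> K" using ls uv unfolding vertices_def by auto
        then have "l \<in> A" using K unfolding act_simplices_def by auto
        have "insert l \<tau>' \<subseteq> \<rho>'" using r(2,3) by simp
        then have "insert l \<tau>' \<in> L" using fc_face[OF fc r(1)] by simp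
        moreover have "\<tau>' \<subseteq> A" using t'(1) unfolding C_def act_closed_star_def by simp
        then have "insert l \<tau>' \<subseteq> A" using \<open>l \<in> A\<close> by simp
        ultimately have "insert l \<tau>' \<in> K" using K by (auto simp: act_simplices_def)
        moreover have "contract_map l s ` insert l \<tau>' = x" using t' nl
          by (auto simp: contract_map_def)
        ultimately show ?thesis by (metis image_eqI)
      qed
    qed
  qed
  show ?thesis using eq fc2 un step by (simp add: C_def)
qed

theorem lemma4:
  fixes ops :: "nat \<Rightarrow> 'v elem_op" and K :: "nat \<Rightarrow> 'v set set" and m :: nat
  assumes "K 0 = {}"
    and "\<forall>i\<le>m. simplicial_complex (K i)"
    and "\<forall>i<m. tower_step (ops i) (coning ops i) (K i) (K (Suc i))"
    and "\<forall>i<m. \<forall>w. ops i = Incl {w} \<longrightarrow> (\<forall>j\<le>i. w \<notin> \<Union> (K j))"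
  shows "\<forall>i\<le>m. \<forall>\<sigma>. \<sigma> \<in> K i \<longleftrightarrow> \<sigma> \<in> act_simplices (coning ops i)"
proof -
  have inv: "K i = act_simplices (coning ops i) \<and> fclosed (fst (coning ops i))
     \<and> \<Union> (fst (coning ops i)) \<subseteq> (\<Union>j\<le>i. \<Union> (K j))" if "i \<le> m" for i
    using that
  proof (induction i)
    case 0
    then show ?case using assms(1) by (simp add: act_simplices_def fclosed_def)
  next
    case (Suc i)
    then have im: "i < m" by simp
    obtain L A where LA: "coning ops i = (L, A)" by fastforce
    from Suc.IH[OF less_imp_le[OF im]] LA have
      IH: "K i = act_simplices (L, A)" "fclosed L" "\<Union> L \<subseteq> (\<Union>j\<le>i. \<Union> (K j))" by auto
    have ts: "tower_step (ops i) (L, A) (K i) (K (Suc i))" using assms(3) im LA by auto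
    have sc: "simplicial_complex (K i)" "simplicial_complex (K (Suc i))" using assms(2) im by auto
    have cs: "coning ops (Suc i) = coning_step (ops i) (L, A)" using LA by simp
    show ?case
    proof (cases "ops i")
      case (Incl \<sigma>)
      have ts': "\<sigma> \<notin> K i" "K (Suc i) = K i \<union> {\<sigma>}" using ts Incl by auto
      have w: "w \<notin> \<Union> L" if "\<sigma> = {w}" for w
      proof -
        have "\<forall>j\<le>i. w \<notin> \<Union> (K j)" using assms(4) im Incl that by simp
        then show ?thesis using IH(3) by auto
      qed
      have r: "K i \<union> {\<sigma>} = act_simplices (coning_step (Incl \<sigma>) (L, A))
        \<and> fclosed (fst (coning_step (Incl \<sigma>) (L, A)))
        \<and> \<Union> (fst (coning_step (Incl \<sigma>) (L, A))) \<subseteq> \<Union> L \<union> \<sigma>"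
        using incl_step[OF IH(1) IH(2) _ ts'(1) w] sc(2) ts'(2) by simp
      have "\<sigma> \<subseteq> \<Union> (K (Suc i))" using ts'(2) by auto
      then have "\<Union> L \<union> \<sigma> \<subseteq> (\<Union>j\<le>Suc i. \<Union> (K j))" using IH(3) by (auto simp: atMost_Suc)
      then show ?thesis using r cs Incl ts'(2) by auto
    next
      case (Contr u v)
      obtain l s where ch: "contr_choice u v (L, A) = (l, s)" by fastforce
      have ts': "u \<noteq> v" "u \<in> vertices (K i)" "v \<in> vertices (K i)"
        "K (Suc i) = (\<lambda>\<tau>. contract_map l s ` \<tau>) ` K i" using ts Contr ch by auto
      from contr_step[OF IH(1) IH(2) sc(1) ts'(1-3) ch] have
        r1: "(\<lambda>\<tau>. contract_map l s ` \<tau>) ` K i = act_simplices (coning_step (Contr u v) (L, A))"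
        and r2: "fclosed (fst (coning_step (Contr u v) (L, A)))"
        and r3: "\<Union> (fst (coning_step (Contr u v) (L, A))) \<subseteq> \<Union> L" by blast+
      have sub: "\<Union> L \<subseteq> (\<Union>j\<le>Suc i. \<Union> (K j))" using IH(3) by (auto simp: atMost_Suc)
      have cs2: "coning ops (Suc i) = coning_step (Contr u v) (L, A)" using cs Contr by simp
      show ?thesis unfolding cs2 ts'(4) using r1 r2 order_trans[OF r3 sub] by blast
    qed
  qed
  show ?thesis using inv by blast
qed

end
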